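(* Let $(Z,Z_{ac},e)$ be an accretive archimedean matrix-order unit space. For $z\in M_n(Z)$ define $\nu_e^n(z)=\inf\{t>0: te\otimes I_n-z\in Z_{ac}^n\}$. Then $\nu_e=\{\nu_e^n\}$ is a matrix gauge on $Z$ (so $(Z,\nu_e)$ is a matrix gauge space), and for each $n$, $Z_{ac}^n=\{z\in M_n(Z):\nu_e^n(-z)=0\}$.
   Context: For a complex vector space $Z$, $M_n(Z)$ is the $n\times n$ matrices over $Z$; $e\otimes I_n$ is the diagonal matrix with all diagonal entries $e$. A cone is a set $C$ with $C+C\subseteq C$, $tC\subseteq C$ ($t\ge0$); a matrix cone is a sequence of cones $C_n\subseteq M_n(Z)$ with $X^*C_nX\subseteq C_k$ for scalar $X\in M_{n,k}$; it is $\mathbb{C}$-proper if $C_1\cap-C_1\cap iC_1\cap-iC_1=\{0\}$, making $(Z,Z_{ac})$ an accretive matrix-ordered vector space, with $Z_{sa}^n=iZ_{ac}^n\cap-iZ_{ac}^n$. An element $e\in Z_{sa}^1$ is an accretive matrix-order unit if for each $n$ and $z\in M_n(Z)$ there is $t>0$ with $te\otimes I_n+z\in Z_{ac}^n$; it is archimedean if $te\otimes I_n+z\in Z_{ac}^n$ for all $t>0$ implies $z\in Z_{ac}^n$; then $(Z,Z_{ac},e)$ is an accretive archimedean matrix-order unit space. A matrix gauge is a sequence $\{\nu_n:M_n(Z)\to[0,\infty)\}$ with $\nu_n(x+y)\le\nu_n(x)+\nu_n(y)$, $\nu_n(tx)=t\nu_n(x)$ ($t\ge0$), $\nu_k(X^*AX)\le\|X\|^2\nu_n(A)$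 for scalar $X\in M_{n,k}$, and $\nu_{n+m}(A\oplus B)=\max\{\nu_n(A),\nu_m(B)\}$. *)

theory Defs
  imports "HOL-Analysis.Analysis"
begin

text \<open>Matrices over a complex vector space Z of size n x n are represented as
functions nat => nat => 'z that vanish outside {0..<n} x {0..<n}.
Scalar matrices X in M_{n,k}(C) are functions nat => nat => complex, of which
only the entries (i,j) with i<n, j<k are used.\<close>

type_synonym 'z mat = "nat \<Rightarrow> nat \<Rightarrow> 'z"

definition Mn :: "nat \<Rightarrow> 'z::zero mat set" where
  "Mn n = {A. \<forall>i j. \<not>(i < n \<and> j < n) \<longrightarrow> A i j = 0}"

definition madd :: "'z::plus mat \<Rightarrow> 'z mat \<Rightarrow> 'z mat" where
  "madd A B = (\<lambda>i j. A i j + B i j)"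

definition mneg :: "'z::uminus mat \<Rightarrow> 'z mat" where
  "mneg A = (\<lambda>i j. - A i j)"

definition mdiff :: "'z::minus mat \<Rightarrow> 'z mat \<Rightarrow> 'z mat" where
  "mdiff A B = (\<lambda>i j. A i j - B i j)"

text \<open>Z is a complex vector space given by a type 'z::ab_group_add together with a
scalar multiplication sc :: complex => 'z => 'z satisfying vector_space sc.
Real scalars act via complex_of_real.\<close>

definition mscaleC :: "(complex \<Rightarrow> 'z \<Rightarrow> 'z) \<Rightarrow> complex \<Rightarrow> 'z mat \<Rightarrow> 'z mat" where
  "mscaleC sc c A = (\<lambda>i j. sc c (A i j))"

definition mscaleR :: "(complex \<Rightarrow> 'z \<Rightarrow> 'z) \<Rightarrow> real \<Rightarrow> 'z mat \<Rightarrow> 'z mat" where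
  "mscaleR sc t A = mscaleC sc (complex_of_real t) A"

definition congr :: "(complex \<Rightarrow> 'z::comm_monoid_add \<Rightarrow> 'z) \<Rightarrow> nat \<Rightarrow> nat \<Rightarrow> complex mat \<Rightarrow> 'z mat \<Rightarrow> 'z mat" where
  "congr sc n k X A = (\<lambda>i j. if i < k \<and> j < k then
      (\<Sum>p<n. \<Sum>q<n. sc (cnj (X p i) * X q j) (A p q)) else 0)"

definition ediag :: "nat \<Rightarrow> 'z::zero \<Rightarrow> 'z mat" where
  "ediag n e = (\<lambda>i j. if i < n \<and> i = j then e else 0)"

definition dsum :: "nat \<Rightarrow> nat \<Rightarrow> 'z::zero mat \<Rightarrow> 'z mat \<Rightarrow> 'z mat" where
  "dsum n m A B = (\<lambda>i j. if i < n \<and> j < n then A i j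
      else if n \<le> i \<and> i < n + m \<and> n \<le> j \<and> j < n + m then B (i - n) (j - n) else 0)"

definition opnorm :: "nat \<Rightarrow> nat \<Rightarrow> complex mat \<Rightarrow> real" where
  "opnorm n k X = (SUP v \<in> {v :: nat \<Rightarrow> complex. (\<Sum>j<k. (cmod (v j))\<^sup>2) \<le> 1}.
      sqrt (\<Sum>i<n. (cmod (\<Sum>j<k. X i j * v j))\<^sup>2))"

definition mat_cone :: "(complex \<Rightarrow> 'z::ab_group_add \<Rightarrow> 'z) \<Rightarrow> (nat \<Rightarrow> 'z mat set) \<Rightarrow> bool" where
  "mat_cone sc C \<longleftrightarrow>
     (\<forall>n\<ge>1. C n \<subseteq> Mn n
        \<and> (\<forall>A\<in>C n. \<forall>B\<in>C n. madd A B \<in> C n)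
        \<and> (\<forall>t\<ge>0. \<forall>A\<in>C n. mscaleR sc t A \<in> C n))
   \<and> (\<forall>n\<ge>1. \<forall>k\<ge>1. \<forall>X. \<forall>A\<in>C n. congr sc n k X A \<in> C k)"

definition C_proper :: "(complex \<Rightarrow> 'z::ab_group_add \<Rightarrow> 'z) \<Rightarrow> (nat \<Rightarrow> 'z mat set) \<Rightarrow> bool" where
  "C_proper sc C \<longleftrightarrow> C 1 \<inter> mneg ` C 1 \<inter> mscaleC sc \<i> ` C 1 \<inter> mscaleC sc (-\<i>) ` C 1 \<subseteq> {\<lambda>i j. 0}"

definition Zsa :: "(complex \<Rightarrow> 'z::ab_group_add \<Rightarrow> 'z) \<Rightarrow> (nat \<Rightarrow> 'z mat set) \<Rightarrow> nat \<Rightarrow> 'z mat set" where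
  "Zsa sc C n = mscaleC sc \<i> ` C n \<inter> mscaleC sc (-\<i>) ` C n"

definition order_unit :: "(complex \<Rightarrow> 'z::ab_group_add \<Rightarrow> 'z) \<Rightarrow> (nat \<Rightarrow> 'z mat set) \<Rightarrow> 'z \<Rightarrow> bool" where
  "order_unit sc C e \<longleftrightarrow> ediag 1 e \<in> Zsa sc C 1 \<and>
     (\<forall>n\<ge>1. \<forall>z\<in>Mn n. \<exists>t>0. madd (mscaleR sc t (ediag n e)) z \<in> C n)"

definition archimedean :: "(complex \<Rightarrow> 'z::ab_group_add \<Rightarrow> 'z) \<Rightarrow> (nat \<Rightarrow> 'z mat set) \<Rightarrow> 'z \<Rightarrow> bool" where
  "archimedean sc C e \<longleftrightarrow>
     (\<forall>n\<ge>1. \<forall>z\<in>Mn n. (\<forall>t>0. madd (mscaleR sc t (ediag n e)) z \<in> C n) \<longrightarrow> z \<in> C n)"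

definition accretive_AMOU_space :: "(complex \<Rightarrow> 'z::ab_group_add \<Rightarrow> 'z) \<Rightarrow> (nat \<Rightarrow> 'z mat set) \<Rightarrow> 'z \<Rightarrow> bool" where
  "accretive_AMOU_space sc C e \<longleftrightarrow> vector_space sc \<and> mat_cone sc C \<and> C_proper sc C \<and> order_unit sc C e \<and> archimedean sc C e"

definition matrix_gauge :: "(complex \<Rightarrow> 'z::ab_group_add \<Rightarrow> 'z) \<Rightarrow> (nat \<Rightarrow> 'z mat \<Rightarrow> real) \<Rightarrow> bool" where
  "matrix_gauge sc \<nu> \<longleftrightarrow>
     (\<forall>n\<ge>1. \<forall>A\<in>Mn n. \<nu> n A \<ge> 0)
   \<and> (\<forall>n\<ge>1. \<forall>A\<in>Mn n. \<forall>B\<in>Mn n. \<nu> n (madd A B) \<le> \<nu> n A + \<nu> n B)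
   \<and> (\<forall>n\<ge>1. \<forall>A\<in>Mn n. \<forall>t\<ge>0. \<nu> n (mscaleR sc t A) = t * \<nu> n A)
   \<and> (\<forall>n\<ge>1. \<forall>k\<ge>1. \<forall>X. \<forall>A\<in>Mn n. \<nu> k (congr sc n k X A) \<le> (opnorm n k X)\<^sup>2 * \<nu> n A)
   \<and> (\<forall>n\<ge>1. \<forall>m\<ge>1. \<forall>A\<in>Mn n. \<forall>B\<in>Mn m. \<nu> (n + m) (dsum n m A B) = max (\<nu> n A) (\<nu> m B))"

definition nu_e :: "(complex \<Rightarrow> 'z::ab_group_add \<Rightarrow> 'z) \<Rightarrow> (nat \<Rightarrow> 'z mat set) \<Rightarrow> 'z \<Rightarrow> nat \<Rightarrow> 'z mat \<Rightarrow> real" where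
  "nu_e sc C e n z = Inf {t. t > 0 \<and> mdiff (mscaleR sc t (ediag n e)) z \<in> C n}"

end

theory Submission
  imports Defs
begin


locale amou =
  fixes sc :: "complex \<Rightarrow> 'z::ab_group_add \<Rightarrow> 'z" and C :: "nat \<Rightarrow> 'z mat set" and e :: 'z
  assumes amou: "accretive_AMOU_space sc C e"
begin

lemma vs: "vector_space sc" using amou unfolding accretive_AMOU_space_def by auto

sublocale vector_space sc by (rule vs)

lemma cone: "mat_cone sc C" using amou unfolding accretive_AMOU_space_def by auto
lemma ou: "order_unit sc C e" using amou unfolding accretive_AMOU_space_def by auto
lemma arch: "archimedean sc C e" using amou unfolding accretive_AMOU_space_def by auto

lemma C_Mn: "n \<ge> 1 \<Longrightarrow> A \<in> C n \<Longrightarrow> A \<in> Mn n" using cone unfolding mat_cone_def by blast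
lemma C_add: "n \<ge> 1 \<Longrightarrow> A \<in> C n \<Longrightarrow> B \<in> C n \<Longrightarrow> madd A B \<in> C n" using cone unfolding mat_cone_def by blast
lemma C_scale: "n \<ge> 1 \<Longrightarrow> t \<ge> 0 \<Longrightarrow> A \<in> C n \<Longrightarrow> mscaleR sc t A \<in> C n" using cone unfolding mat_cone_def by blast
lemma C_congr: "n \<ge> 1 \<Longrightarrow> k \<ge> 1 \<Longrightarrow> A \<in> C n \<Longrightarrow> congr sc n k X A \<in> C k" using cone unfolding mat_cone_def by blast

abbreviation EI :: "nat \<Rightarrow> real \<Rightarrow> 'z mat" where "EI n t \<equiv> mscaleR sc t (ediag n e)"

definition S :: "nat \<Rightarrow> 'z mat \<Rightarrow> real set" where
  "S n z = {t. t > 0 \<and> mdiff (EI n t) z \<in> C n}"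

lemma nu_S: "nu_e sc C e n z = Inf (S n z)" unfolding nu_e_def S_def ..

lemma scaleR_scaleR: "mscaleR sc a (mscaleR sc b A) = mscaleR sc (a*b) A"
  unfolding mscaleR_def mscaleC_def by (simp add: mult.commute)

lemma EI_C: assumes "n \<ge> 1" "t \<ge> 0" shows "EI n t \<in> C n"
proof -
  have "(\<lambda>i j. 0) \<in> Mn n" unfolding Mn_def by auto
  then obtain t0 where t0: "t0 > 0" "madd (EI n t0) (\<lambda>i j. 0) \<in> C n"
    using ou assms unfolding order_unit_def by blast
  have "madd (EI n t0) (\<lambda>i j. 0) = EI n t0" unfolding madd_def by simp
  with t0 have "mscaleR sc (t/t0) (EI n t0) \<in> C n" using C_scale assms by auto
  then show ?thesis using t0 by (simp add: scaleR_scaleR)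
qed

lemma S_ne: assumes "n \<ge> 1" "z \<in> Mn n" shows "S n z \<noteq> {}"
proof -
  have "mneg z \<in> Mn n" using assms unfolding Mn_def mneg_def by auto
  then obtain t where "t > 0" "madd (EI n t) (mneg z) \<in> C n"
    using ou assms unfolding order_unit_def by blast
  moreover have "madd (EI n t) (mneg z) = mdiff (EI n t) z" unfolding madd_def mneg_def mdiff_def by auto
  ultimately show ?thesis unfolding S_def by auto
qed

lemma S_up: assumes "n \<ge> 1" "t \<in> S n z" "t \<le> t'" shows "t' \<in> S n z"
proof -
  have "mdiff (EI n t') z = madd (EI n (t'-t)) (mdiff (EI n t) z)"
    unfolding madd_def mdiff_def mscaleR_def mscaleC_def
    by (simp add: of_real_diff scale_left_diff_distrib algebra_simps)
  moreover have "EI n (t'-t) \<in> C n" using EI_C assms by auto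
  ultimately show ?thesis using assms C_add unfolding S_def by auto
qed

lemma S_bdd: "bdd_below (S n z)" unfolding S_def bdd_below_def by (rule exI[of _ 0]) auto

lemma nu_ge0: assumes "n \<ge> 1" "z \<in> Mn n" shows "nu_e sc C e n z \<ge> 0"
  unfolding nu_S using S_ne[OF assms] by (rule cInf_greatest) (auto simp: S_def)

lemma nu_le: "t \<in> S n z \<Longrightarrow> nu_e sc C e n z \<le> t"
  unfolding nu_S by (rule cInf_lower[OF _ S_bdd])

lemma nu_less: assumes "n \<ge> 1" "z \<in> Mn n" "nu_e sc C e n z < t" shows "t \<in> S n z"
proof -
  obtain s where "s \<in> S n z" "s < t" using assms S_ne[OF assms(1,2)] unfolding nu_S
    by (meson cInf_lessD)
  then show ?thesis using S_up assms by auto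
qed

lemma nu_zero: assumes "\<And>t. t > 0 \<Longrightarrow> t \<in> S n z" shows "nu_e sc C e n z = 0"
proof -
  have "S n z = {0<..}" using assms unfolding S_def by auto
  then show ?thesis unfolding nu_S by simp
qed


lemma Mn_add: "(A::'z mat) \<in> Mn n \<Longrightarrow> B \<in> Mn n \<Longrightarrow> madd A B \<in> Mn n" unfolding Mn_def madd_def by auto
lemma Mn_neg: "(A::'z mat) \<in> Mn n \<Longrightarrow> mneg A \<in> Mn n" unfolding Mn_def mneg_def by auto
lemma Mn_scale: "(A::'z mat) \<in> Mn n \<Longrightarrow> mscaleR sc t A \<in> Mn n" unfolding Mn_def mscaleR_def mscaleC_def by auto

lemma subadd: assumes "n \<ge> 1" "A \<in> Mn n" "B \<in> Mn n"
  shows "nu_e sc C e n (madd A B) \<le> nu_e sc C e n A + nu_e sc C e n B"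
proof (rule field_le_epsilon)
  fix \<epsilon> :: real assume "\<epsilon> > 0"
  define s where "s = nu_e sc C e n A + \<epsilon>/2"
  define s' where "s' = nu_e sc C e n B + \<epsilon>/2"
  have "s \<in> S n A" "s' \<in> S n B" using nu_less assms \<open>\<epsilon>>0\<close> unfolding s_def s'_def by auto
  moreover have "mdiff (EI n (s+s')) (madd A B) = madd (mdiff (EI n s) A) (mdiff (EI n s') B)"
    unfolding madd_def mdiff_def mscaleR_def mscaleC_def
    by (auto simp: scale_left_distrib algebra_simps)
  ultimately have "s + s' \<in> S n (madd A B)" using C_add assms unfolding S_def by auto
  then have "nu_e sc C e n (madd A B) \<le> s + s'" by (rule nu_le)
  then show "nu_e sc C e n (madd A B) \<le> nu_e sc C e n A + nu_e sc C e n B + \<epsilon>"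
    unfolding s_def s'_def by simp
qed

lemma homog: assumes "n \<ge> 1" "A \<in> Mn n" "t \<ge> 0"
  shows "nu_e sc C e n (mscaleR sc t A) = t * nu_e sc C e n A"
proof (cases "t = 0")
  case True
  have "mscaleR sc t A = (\<lambda>i j. 0)" using True unfolding mscaleR_def mscaleC_def by auto
  moreover have "nu_e sc C e n (\<lambda>i j. 0) = 0"
  proof (rule nu_zero)
    fix s :: real assume "s > 0"
    have "mdiff (EI n s) (\<lambda>i j. 0) = EI n s" unfolding mdiff_def by simp
    then show "s \<in> S n (\<lambda>i j. 0)" using EI_C assms \<open>s>0\<close> unfolding S_def by auto
  qed
  ultimately show ?thesis using True by simp
next
  case False
  then have tp: "t > 0" using assms by auto
  have tA: "mscaleR sc t A \<in> Mn n" using Mn_scale assms by auto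
  have 1: "t * s \<in> S n (mscaleR sc t A)" if "s \<in> S n A" for s
  proof -
    have "mdiff (EI n (t * s)) (mscaleR sc t A) = mscaleR sc t (mdiff (EI n s) A)"
      unfolding mdiff_def mscaleR_def mscaleC_def by (auto simp: scale_right_diff_distrib mult.commute)
    then show ?thesis using that C_scale assms tp unfolding S_def by auto
  qed
  have 2: "s / t \<in> S n A" if "s \<in> S n (mscaleR sc t A)" for s
  proof -
    have "mdiff (EI n (s/t)) A = mscaleR sc (1/t) (mdiff (EI n s) (mscaleR sc t A))"
      unfolding mdiff_def mscaleR_def mscaleC_def using tp by (auto simp: scale_right_diff_distrib)
    then show ?thesis using that C_scale assms tp unfolding S_def by auto
  qed
  have "nu_e sc C e n (mscaleR sc t A) / t \<le> nu_e sc C e n A"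
    unfolding nu_S[of n A]
  proof (rule cInf_greatest[OF S_ne[OF assms(1,2)]])
    fix s assume "s \<in> S n A"
    then have "nu_e sc C e n (mscaleR sc t A) \<le> t * s" using 1 nu_le by blast
    then show "nu_e sc C e n (mscaleR sc t A) / t \<le> s" using tp by (simp add: field_simps)
  qed
  moreover have "t * nu_e sc C e n A \<le> nu_e sc C e n (mscaleR sc t A)"
    unfolding nu_S[of n "mscaleR sc t A"]
  proof (rule cInf_greatest[OF S_ne[OF assms(1) tA]])
    fix s assume "s \<in> S n (mscaleR sc t A)"
    then have "nu_e sc C e n A \<le> s / t" using 2 nu_le by blast
    then show "t * nu_e sc C e n A \<le> s" using tp by (simp add: field_simps)
  qed
  ultimately show ?thesis using tp by (simp add: field_simps)
qed

lemma part2: assumes "n \<ge> 1" shows "C n = {z \<in> Mn n. nu_e sc C e n (mneg z) = 0}"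
proof safe
  fix z assume z: "z \<in> C n"
  then show "z \<in> Mn n" using C_Mn assms by auto
  show "nu_e sc C e n (mneg z) = 0"
  proof (rule nu_zero)
    fix t :: real assume "t > 0"
    have "mdiff (EI n t) (mneg z) = madd (EI n t) z" unfolding madd_def mneg_def mdiff_def by auto
    then show "t \<in> S n (mneg z)" using C_add EI_C z assms \<open>t>0\<close> unfolding S_def by auto
  qed
next
  fix z assume z: "z \<in> Mn n" "nu_e sc C e n (mneg z) = 0"
  have "madd (EI n t) z \<in> C n" if "t > 0" for t
  proof -
    have "t \<in> S n (mneg z)" using nu_less[OF assms Mn_neg[OF z(1)]] z that by auto
    moreover have "mdiff (EI n t) (mneg z) = madd (EI n t) z" unfolding madd_def mneg_def mdiff_def by auto
    ultimately show ?thesis unfolding S_def by auto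
  qed
  then show "z \<in> C n" using arch assms z unfolding archimedean_def by blast
qed

end


definition bf :: "nat \<Rightarrow> complex mat \<Rightarrow> (nat\<Rightarrow>complex) \<Rightarrow> (nat\<Rightarrow>complex) \<Rightarrow> complex" where
  "bf k P x y = (\<Sum>a<k. \<Sum>b<k. cnj (x a) * P a b * y b)"
definition herm :: "nat \<Rightarrow> complex mat \<Rightarrow> bool" where
  "herm k P \<longleftrightarrow> (\<forall>a<k. \<forall>b<k. P b a = cnj (P a b))"
definition psd :: "nat \<Rightarrow> complex mat \<Rightarrow> bool" where
  "psd k P \<longleftrightarrow> herm k P \<and> (\<forall>v. 0 \<le> Re (bf k P v v))"
definition dl :: "nat \<Rightarrow> nat \<Rightarrow> complex" where "dl i = (\<lambda>a. if a = i then 1 else 0)"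

lemma bf_expand: "bf k P (\<lambda>a. u a + c * w a) (\<lambda>a. u a + c * w a) =
   bf k P u u + c * bf k P u w + cnj c * bf k P w u + c * cnj c * bf k P w w"
  unfolding bf_def by (simp add: algebra_simps sum.distrib sum_distrib_left)

lemma bf_dl_left: "bf k P (dl i) y = (if i < k then \<Sum>b<k. P i b * y b else 0)"
proof -
  have "(\<Sum>b<k. cnj (dl i a) * P a b * y b) = (if a = i then \<Sum>b<k. P i b * y b else 0)" for a
    by (simp add: dl_def)
  then show ?thesis unfolding bf_def by (simp add: sum.delta)
qed

lemma bf_dl_right: "bf k P x (dl j) = (if j < k then \<Sum>a<k. cnj (x a) * P a j else 0)"
proof -
  have "(\<Sum>b<k. cnj (x a) * P a b * dl j b) = (if j < k then cnj (x a) * P a j else 0)" for a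
    by (simp add: dl_def if_distrib sum.delta' cong: if_cong)
  then show ?thesis unfolding bf_def by (simp add: sum.delta)
qed

lemma bf_dl_dl: "bf k P (dl i) (dl j) = (if i < k \<and> j < k then P i j else 0)"
  unfolding bf_dl_left by (simp add: dl_def if_distrib sum.delta' cong: if_cong)


lemma psd_diag: assumes "psd k P" "i < k" shows "P i i = complex_of_real (Re (P i i))" "Re (P i i) \<ge> 0"
proof -
  have "P i i = cnj (P i i)" using assms unfolding psd_def herm_def by blast
  then have "Im (P i i) = Im (cnj (P i i))" by (rule arg_cong)
  then have "Im (P i i) = 0" by simp
  then show "P i i = complex_of_real (Re (P i i))" by (simp add: complex_eq_iff)
  have "0 \<le> Re (bf k P (dl i) (dl i))" using assms unfolding psd_def by auto
  then show "Re (P i i) \<ge> 0" using assms by (simp add: bf_dl_dl)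
qed

lemma psd_zero_diag: assumes "psd k P" "\<forall>i<k. P i i = 0" "a < k" "b < k" shows "P b a = 0"
proof -
  have h: "P a b = cnj (P b a)" using assms unfolding psd_def herm_def by blast
  define c where "c = - cnj (P b a)"
  have "0 \<le> Re (bf k P (\<lambda>x. dl b x + c * dl a x) (\<lambda>x. dl b x + c * dl a x))"
    using assms unfolding psd_def by auto
  also have "bf k P (\<lambda>x. dl b x + c * dl a x) (\<lambda>x. dl b x + c * dl a x) = c * P b a + cnj c * P a b"
    unfolding bf_expand bf_dl_dl using assms by simp
  also have "\<dots> = - cnj (P b a) * P b a + - P b a * cnj (P b a)"
    unfolding c_def h by simp
  also have "\<dots> = - 2 * complex_of_real ((cmod (P b a))\<^sup>2)"
    by (simp only: complex_norm_square) (simp add: algebra_simps)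
  finally have "(cmod (P b a))\<^sup>2 \<le> 0" by simp
  then show ?thesis by simp
qed

lemma alg_step: fixes B \<alpha> :: complex and d :: real assumes "d > 0"
  shows "B - cnj \<alpha> * \<alpha> / complex_of_real d =
    B + (- \<alpha> / complex_of_real d) * cnj \<alpha> + cnj (- \<alpha> / complex_of_real d) * \<alpha>
      + (- \<alpha> / complex_of_real d) * cnj (- \<alpha> / complex_of_real d) * complex_of_real d"
  using assms by (simp add: field_simps)

lemma psd_step: assumes "psd k P" "i < k" and d: "d = Re (P i i)" "d > 0"
  defines "P' \<equiv> (\<lambda>a b. P a b - P a i * cnj (P b i) / complex_of_real d)"
  shows "psd k P'"
proof -
  have h: "\<And>a b. a < k \<Longrightarrow> b < k \<Longrightarrow> P b a = cnj (P a b)" using assms unfolding psd_def herm_def by blast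
  have Pii: "P i i = complex_of_real d" using psd_diag assms by auto
  have "herm k P'" unfolding herm_def P'_def
  proof (intro allI impI)
    fix a b assume "a < k" "b < k"
    then show "P b a - P b i * cnj (P a i) / complex_of_real d = cnj (P a b - P a i * cnj (P b i) / complex_of_real d)"
      using h[of a b] by simp
  qed
  moreover have "0 \<le> Re (bf k P' v v)" for v
  proof -
    define \<alpha> where "\<alpha> = (\<Sum>b<k. P i b * v b)"
    have a1: "(\<Sum>b<k. cnj (P b i) * v b) = \<alpha>" unfolding \<alpha>_def
    proof (rule sum.cong[OF refl])
      fix b assume "b \<in> {..<k}"
      then have "P i b = cnj (P b i)" using h[of b i] assms(2) by simp
      then show "cnj (P b i) * v b = P i b * v b" by simp
    qed
    have a2: "(\<Sum>a<k. cnj (v a) * P a i) = cnj \<alpha>"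
    proof -
      have "cnj \<alpha> = (\<Sum>a<k. cnj (P i a) * cnj (v a))" unfolding \<alpha>_def by (simp add: cnj_sum)
      also have "\<dots> = (\<Sum>a<k. cnj (v a) * P a i)"
      proof (rule sum.cong[OF refl])
        fix a assume "a \<in> {..<k}"
        then have "P a i = cnj (P i a)" using h[of i a] assms(2) by simp
        then show "cnj (P i a) * cnj (v a) = cnj (v a) * P a i" by simp
      qed
      finally show ?thesis by simp
    qed
    have e1: "bf k P' v v = bf k P v v - (\<Sum>a<k. \<Sum>b<k. (cnj (v a) * P a i) * (cnj (P b i) * v b)) / complex_of_real d"
      unfolding bf_def P'_def sum_divide_distrib sum_subtractf[symmetric]
      by (intro sum.cong refl) (simp add: algebra_simps)
    have "bf k P' v v = bf k P v v - cnj \<alpha> * \<alpha> / complex_of_real d"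
      unfolding e1 sum_product[symmetric] a1 a2 ..
    also have "\<dots> = bf k P (\<lambda>x. v x + (- \<alpha> / complex_of_real d) * dl i x) (\<lambda>x. v x + (- \<alpha> / complex_of_real d) * dl i x)"
    proof -
      have q1: "bf k P (dl i) (dl i) = complex_of_real d" using Pii assms(2) by (simp add: bf_dl_dl)
      have q2: "bf k P v (dl i) = cnj \<alpha>" using a2 assms(2) by (simp add: bf_dl_right)
      have q3: "bf k P (dl i) v = \<alpha>" using assms(2) by (simp add: bf_dl_left \<alpha>_def)
      show ?thesis unfolding bf_expand q1 q2 q3 by (rule alg_step[OF d(2)])
    qed
    finally show ?thesis using assms(1) unfolding psd_def by auto
  qed
  ultimately show ?thesis unfolding psd_def by auto
qed



definition mv :: "nat \<Rightarrow> complex mat \<Rightarrow> (nat \<Rightarrow> complex) \<Rightarrow> nat \<Rightarrow> complex" where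
  "mv k X v = (\<lambda>p. \<Sum>j<k. X p j * v j)"

definition VB :: "nat \<Rightarrow> (nat \<Rightarrow> complex) set" where
  "VB k = {v. (\<Sum>j<k. (cmod (v j))\<^sup>2) \<le> 1}"

lemma opnorm_alt: "opnorm n k X = (SUP v \<in> VB k. sqrt (\<Sum>i<n. (cmod (mv k X v i))\<^sup>2))"
  unfolding opnorm_def VB_def mv_def ..

lemma opnorm_bdd: "bdd_above ((\<lambda>v. sqrt (\<Sum>i<n. (cmod (mv k X v i))\<^sup>2)) ` VB k)"
proof (rule bdd_aboveI2)
  fix v assume v: "v \<in> VB k"
  have vj: "cmod (v j) \<le> 1" if "j < k" for j
  proof -
    have "(cmod (v j))\<^sup>2 \<le> (\<Sum>j<k. (cmod (v j))\<^sup>2)"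
      by (rule member_le_sum) (use that in auto)
    then have "(cmod (v j))\<^sup>2 \<le> 1" using v unfolding VB_def by simp
    then show ?thesis by (simp add: power_le_one_iff abs_square_le_1)
  qed
  have "cmod (mv k X v i) \<le> (\<Sum>j<k. cmod (X i j))" for i
  proof -
    have "cmod (mv k X v i) \<le> (\<Sum>j<k. cmod (X i j * v j))" unfolding mv_def by (rule norm_sum)
    also have "\<dots> \<le> (\<Sum>j<k. cmod (X i j))"
    proof (rule sum_mono)
      fix j assume "j \<in> {..<k}"
      then show "cmod (X i j * v j) \<le> cmod (X i j)"
        using vj[of j] by (simp add: norm_mult mult_left_le)
    qed
    finally show ?thesis .
  qed
  then have "(\<Sum>i<n. (cmod (mv k X v i))\<^sup>2) \<le> (\<Sum>i<n. (\<Sum>j<k. cmod (X i j))\<^sup>2)"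
    by (intro sum_mono power_mono) auto
  then show "sqrt (\<Sum>i<n. (cmod (mv k X v i))\<^sup>2) \<le> sqrt (\<Sum>i<n. (\<Sum>j<k. cmod (X i j))\<^sup>2)"
    by simp
qed

lemma zero_VB: "(\<lambda>_. 0) \<in> VB k" unfolding VB_def by simp

lemma opnorm_upper: "v \<in> VB k \<Longrightarrow> sqrt (\<Sum>i<n. (cmod (mv k X v i))\<^sup>2) \<le> opnorm n k X"
  unfolding opnorm_alt by (rule cSUP_upper[OF _ opnorm_bdd])

lemma opnorm_nonneg: "opnorm n k X \<ge> 0"
  using opnorm_upper[where v="\<lambda>_. 0" and k=k and n=n and X=X] zero_VB[of k] by (simp add: mv_def)

lemma opnorm_bound: "(\<Sum>i<n. (cmod (mv k X v i))\<^sup>2) \<le> (opnorm n k X)\<^sup>2 * (\<Sum>j<k. (cmod (v j))\<^sup>2)"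
proof (cases "(\<Sum>j<k. (cmod (v j))\<^sup>2) = 0")
  case True
  then have "\<forall>j\<in>{..<k}. v j = 0" by (subst (asm) sum_nonneg_eq_0_iff) auto
  then have "mv k X v i = 0" for i unfolding mv_def by simp
  then show ?thesis using True by simp
next
  case False
  define N2 where "N2 = (\<Sum>j<k. (cmod (v j))\<^sup>2)"
  have N2p: "N2 > 0" using False unfolding N2_def by (simp add: order_less_le sum_nonneg)
  define N where "N = sqrt N2"
  have Np: "N > 0" using N2p unfolding N_def by simp
  have NN: "N\<^sup>2 = N2" using N2p unfolding N_def by simp
  define u where "u = (\<lambda>j. v j / complex_of_real N)"
  have "(\<Sum>j<k. (cmod (u j))\<^sup>2) = (\<Sum>j<k. (cmod (v j))\<^sup>2) / N\<^sup>2"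
    unfolding u_def by (simp add: norm_divide power_divide sum_divide_distrib)
  also have "\<dots> = 1" using NN N2p unfolding N2_def by simp
  finally have "u \<in> VB k" unfolding VB_def by simp
  then have "sqrt (\<Sum>i<n. (cmod (mv k X u i))\<^sup>2) \<le> opnorm n k X" by (rule opnorm_upper)
  moreover have "(\<Sum>i<n. (cmod (mv k X u i))\<^sup>2) = (\<Sum>i<n. (cmod (mv k X v i))\<^sup>2) / N2"
  proof -
    have "mv k X u i = mv k X v i / complex_of_real N" for i
      unfolding mv_def u_def by (simp add: sum_divide_distrib)
    then show ?thesis using Np NN by (simp add: norm_divide power_divide sum_divide_distrib)
  qed
  ultimately have "sqrt ((\<Sum>i<n. (cmod (mv k X v i))\<^sup>2) / N2) \<le> opnorm n k X" by simp
  then have "(\<Sum>i<n. (cmod (mv k X v i))\<^sup>2) / N2 \<le> (opnorm n k X)\<^sup>2"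
    by (simp add: real_sqrt_le_iff sqrt_le_D)
  then show ?thesis using N2p unfolding N2_def[symmetric] by (simp add: field_simps)
qed


definition gram :: "nat \<Rightarrow> complex mat \<Rightarrow> real \<Rightarrow> complex mat" where
  "gram n X r = (\<lambda>a b. complex_of_real (r\<^sup>2) * (if a = b then 1 else 0) - (\<Sum>p<n. cnj (X p a) * X p b))"

lemma gram_quad: "bf k (gram n X r) v v =
   complex_of_real (r\<^sup>2) * (\<Sum>a<k. cnj (v a) * v a) - (\<Sum>p<n. cnj (mv k X v p) * mv k X v p)"
proof -
  have 1: "bf k (gram n X r) v v = (\<Sum>a<k. \<Sum>b<k. cnj (v a) * (complex_of_real (r\<^sup>2) * (if a = b then 1 else 0)) * v b)
      - (\<Sum>a<k. \<Sum>b<k. cnj (v a) * (\<Sum>p<n. cnj (X p a) * X p b) * v b)"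
    unfolding bf_def gram_def sum_subtractf[symmetric] by (intro sum.cong refl) (simp add: algebra_simps)
  have 2: "(\<Sum>a<k. \<Sum>b<k. cnj (v a) * (complex_of_real (r\<^sup>2) * (if a = b then 1 else 0)) * v b)
      = complex_of_real (r\<^sup>2) * (\<Sum>a<k. cnj (v a) * v a)"
  proof -
    have "(\<Sum>b<k. cnj (v a) * (complex_of_real (r\<^sup>2) * (if a = b then 1 else 0)) * v b)
       = (if a < k then complex_of_real (r\<^sup>2) * (cnj (v a) * v a) else 0)" for a
    proof -
      have "(\<Sum>b<k. cnj (v a) * (complex_of_real (r\<^sup>2) * (if a = b then 1 else 0)) * v b)
        = (\<Sum>b<k. if a = b then complex_of_real (r\<^sup>2) * (cnj (v a) * v a) else 0)"
        by (rule sum.cong) auto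
      then show ?thesis by (simp add: sum.delta)
    qed
    then show ?thesis by (simp add: sum_distrib_left)
  qed
  have 3: "(\<Sum>a<k. \<Sum>b<k. cnj (v a) * (\<Sum>p<n. cnj (X p a) * X p b) * v b)
     = (\<Sum>p<n. cnj (mv k X v p) * mv k X v p)"
  proof -
    have "(\<Sum>a<k. \<Sum>b<k. cnj (v a) * (\<Sum>p<n. cnj (X p a) * X p b) * v b)
       = (\<Sum>a<k. \<Sum>b<k. \<Sum>p<n. (cnj (X p a) * cnj (v a)) * (X p b * v b))"
      by (simp add: sum_distrib_left sum_distrib_right algebra_simps)
    also have "\<dots> = (\<Sum>a<k. \<Sum>p<n. \<Sum>b<k. (cnj (X p a) * cnj (v a)) * (X p b * v b))"
      by (rule sum.cong[OF refl], rule sum.swap)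
    also have "\<dots> = (\<Sum>p<n. \<Sum>a<k. \<Sum>b<k. (cnj (X p a) * cnj (v a)) * (X p b * v b))"
      by (rule sum.swap)
    also have "\<dots> = (\<Sum>p<n. cnj (mv k X v p) * mv k X v p)"
      unfolding mv_def cnj_sum complex_cnj_mult sum_product ..
    finally show ?thesis .
  qed
  show ?thesis unfolding 1 2 3 ..
qed

lemma cnj_mult_self: "cnj z * z = complex_of_real ((cmod z)\<^sup>2)"
  by (simp only: complex_norm_square) (simp add: mult.commute)

lemma gram_psd: assumes "r \<ge> opnorm n k X" shows "psd k (gram n X r)"
proof -
  have "herm k (gram n X r)" unfolding herm_def gram_def
    by (simp add: cnj_sum mult.commute)
  moreover have "0 \<le> Re (bf k (gram n X r) v v)" for v
  proof -
    have "Re (bf k (gram n X r) v v) = r\<^sup>2 * (\<Sum>a<k. (cmod (v a))\<^sup>2) - (\<Sum>p<n. (cmod (mv k X v p))\<^sup>2)"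
      unfolding gram_quad cnj_mult_self by (simp add: Re_sum del: of_real_power)
    moreover have "(opnorm n k X)\<^sup>2 \<le> r\<^sup>2" using assms opnorm_nonneg by (intro power_mono) auto
    then have "(opnorm n k X)\<^sup>2 * (\<Sum>a<k. (cmod (v a))\<^sup>2) \<le> r\<^sup>2 * (\<Sum>a<k. (cmod (v a))\<^sup>2)"
      by (intro mult_right_mono sum_nonneg) auto
    ultimately show ?thesis using opnorm_bound[where n=n and k=k and X=X and v=v] by simp
  qed
  ultimately show ?thesis unfolding psd_def by auto
qed



context amou begin

definition emat :: "nat \<Rightarrow> complex mat \<Rightarrow> 'z mat" where
  "emat k P = (\<lambda>i j. if i < k \<and> j < k then sc (P i j) e else 0)"

lemma ediag1_C: "ediag 1 e \<in> C 1"
proof -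
  have "EI 1 1 = ediag 1 e" unfolding mscaleR_def mscaleC_def by simp
  then show ?thesis using EI_C[of 1 1] by simp
qed

lemma rank1_re: fixes x :: complex and d :: real assumes "d > 0"
  shows "Re (- (x * cnj x / complex_of_real d)) = - (cmod x)\<^sup>2 / d"
proof -
  have "x * cnj x = complex_of_real ((cmod x)\<^sup>2)" by (simp only: complex_norm_square)
  then show ?thesis by (simp del: of_real_power)
qed

lemma psd_C: "k \<ge> 1 \<Longrightarrow> psd k P \<Longrightarrow> emat k P \<in> C k"
proof (induction "card {j. j<k \<and> P j j \<noteq> 0}" arbitrary: P rule: less_induct)
  case less
  show ?case
  proof (cases "\<exists>i<k. P i i \<noteq> 0")
    case False
    then have z: "\<And>a b. a < k \<Longrightarrow> b < k \<Longrightarrow> P a b = 0" using psd_zero_diag less.prems by blast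
    have "emat k P = EI k 0" unfolding emat_def mscaleR_def mscaleC_def
      by (intro ext) (simp add: z)
    then show ?thesis using EI_C less.prems by simp
  next
    case True
    then obtain i where i: "i < k" "P i i \<noteq> 0" by blast
    define d where "d = Re (P i i)"
    have Pii: "P i i = complex_of_real d" using psd_diag[OF less.prems(2) i(1)] d_def by simp
    have "d \<ge> 0" using psd_diag[OF less.prems(2) i(1)] d_def by simp
    moreover have "d \<noteq> 0" using Pii i by auto
    ultimately have dp: "d > 0" by simp
    define P' where "P' = (\<lambda>a b. P a b - P a i * cnj (P b i) / complex_of_real d)"
    have psd': "psd k P'" unfolding P'_def by (rule psd_step[OF less.prems(2) i(1) d_def dp])
    have sub: "{j. j<k \<and> P' j j \<noteq> 0} \<subset> {j. j<k \<and> P j j \<noteq> 0}"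
    proof -
      have "P' i i = 0" unfolding P'_def Pii using dp by simp
      moreover have "P' j j = 0" if "j < k" "P j j = 0" for j
      proof -
        have "Re (P' j j) \<ge> 0" using psd_diag[OF psd' that(1)] by simp
        moreover have "Re (P' j j) = - (cmod (P j i))\<^sup>2 / d"
          unfolding P'_def using that(2) rank1_re[OF dp, of "P j i"] by simp
        ultimately have "(cmod (P j i))\<^sup>2 / d \<le> 0" by simp
        then have "(cmod (P j i))\<^sup>2 \<le> 0" using dp by (simp add: divide_le_0_iff)
        then have "P j i = 0" by simp
        then show ?thesis unfolding P'_def using that(2) by simp
      qed
      ultimately show ?thesis using i by blast
    qed
    have "card {j. j<k \<and> P' j j \<noteq> 0} < card {j. j<k \<and> P j j \<noteq> 0}"
      by (rule psubset_card_mono[OF _ sub]) simp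
    then have IH: "emat k P' \<in> C k" using less.hyps less.prems psd' by blast
    define X where "X = (\<lambda>(p::nat) b. cnj (P b i) / complex_of_real (sqrt d))"
    have XX: "cnj (X 0 a) * X 0 b = P a i * cnj (P b i) / complex_of_real d" for a b
    proof -
      have "complex_of_real (sqrt d) * complex_of_real (sqrt d) = complex_of_real d"
        using dp by (simp flip: of_real_mult)
      then show ?thesis unfolding X_def by (simp add: field_simps)
    qed
    have "emat k P = madd (emat k P') (congr sc 1 k X (ediag 1 e))"
    proof (intro ext)
      fix a b
      show "emat k P a b = madd (emat k P') (congr sc 1 k X (ediag 1 e)) a b"
      proof (cases "a < k \<and> b < k")
        case True
        have "congr sc 1 k X (ediag 1 e) a b = sc (P a i * cnj (P b i) / complex_of_real d) e"
          using True XX unfolding congr_def ediag_def by simp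
        then show ?thesis using True unfolding emat_def madd_def P'_def
          by (simp add: scale_left_diff_distrib)
      next
        case False
        then show ?thesis unfolding emat_def madd_def congr_def by auto
      qed
    qed
    moreover have "congr sc 1 k X (ediag 1 e) \<in> C k" using C_congr[OF _ less.prems(1) ediag1_C] by simp
    ultimately show ?thesis using C_add IH less.prems by simp
  qed
qed

end


context amou begin

lemma congr_EI: "congr sc n k X (EI n s) i j =
   (if i < k \<and> j < k then sc (complex_of_real s * (\<Sum>p<n. cnj (X p i) * X p j)) e else 0)"
proof (cases "i < k \<and> j < k")
  case True
  have "congr sc n k X (EI n s) i j = (\<Sum>p<n. \<Sum>q<n. sc (cnj (X p i) * X q j) (sc (complex_of_real s) (if p < n \<and> p = q then e else 0)))"
    unfolding congr_def mscaleR_def mscaleC_def ediag_def using True by (simp only: simp_thms if_True)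
  also have "\<dots> = (\<Sum>p<n. sc (cnj (X p i) * X p j * complex_of_real s) e)"
  proof (rule sum.cong[OF refl])
    fix p assume p: "p \<in> {..<n}"
    have "(\<Sum>q<n. sc (cnj (X p i) * X q j) (sc (complex_of_real s) (if p < n \<and> p = q then e else 0)))
       = (\<Sum>q<n. if p = q then sc (cnj (X p i) * X p j * complex_of_real s) e else 0)"
      by (rule sum.cong) (use p in auto)
    then show "(\<Sum>q<n. sc (cnj (X p i) * X q j) (sc (complex_of_real s) (if p < n \<and> p = q then e else 0)))
       = sc (cnj (X p i) * X p j * complex_of_real s) e" using p by (simp add: sum.delta)
  qed
  also have "\<dots> = sc (complex_of_real s * (\<Sum>p<n. cnj (X p i) * X p j)) e"
    by (simp add: scale_sum_left sum_distrib_left mult.commute)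
  finally show ?thesis using True by simp
next
  case False
  then show ?thesis unfolding congr_def by auto
qed

lemma congr_diff: "congr sc n k X (mdiff M N) = mdiff (congr sc n k X M) (congr sc n k X N)"
  unfolding congr_def mdiff_def by (intro ext) (simp add: scale_right_diff_distrib sum_subtractf)

lemma congr_step: assumes "n \<ge> 1" "k \<ge> 1" "s0 \<in> S n A" "r \<ge> opnorm n k X" "r > 0"
  shows "s0 * r\<^sup>2 \<in> S k (congr sc n k X A)"
proof -
  have s0: "s0 > 0" "mdiff (EI n s0) A \<in> C n" using assms(3) unfolding S_def by auto
  have r0: "r \<ge> 0" using assms(4) opnorm_nonneg[of n k X] by linarith
  have eq: "mdiff (EI k (s0 * r\<^sup>2)) (congr sc n k X A) =
     madd (mscaleR sc s0 (emat k (gram n X r))) (congr sc n k X (mdiff (EI n s0) A))"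
  proof (intro ext)
    fix i j
    show "mdiff (EI k (s0 * r\<^sup>2)) (congr sc n k X A) i j =
      madd (mscaleR sc s0 (emat k (gram n X r))) (congr sc n k X (mdiff (EI n s0) A)) i j"
    proof (cases "i < k \<and> j < k")
      case True
      show ?thesis
        apply (unfold congr_diff)
        apply (unfold madd_def mdiff_def congr_EI)
        using True apply (unfold mscaleR_def mscaleC_def emat_def gram_def ediag_def)
        apply (simp add: scale_left_diff_distrib algebra_simps)
        done
    next
      case False
      then show ?thesis unfolding madd_def mdiff_def mscaleR_def mscaleC_def emat_def ediag_def congr_def
        by auto
    qed
  qed
  have "mscaleR sc s0 (emat k (gram n X r)) \<in> C k"
    using C_scale[OF assms(2)] psd_C[OF assms(2) gram_psd[OF assms(4)]] s0 by simp
  moreover have "congr sc n k X (mdiff (EI n s0) A) \<in> C k" using C_congr assms s0 by blast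
  ultimately have "mdiff (EI k (s0 * r\<^sup>2)) (congr sc n k X A) \<in> C k" unfolding eq using C_add assms by blast
  moreover have "s0 * r\<^sup>2 > 0" using s0 assms(5) by auto
  ultimately show ?thesis unfolding S_def by auto
qed


lemma congr_nu: assumes "n \<ge> 1" "k \<ge> 1" "A \<in> Mn n"
  shows "nu_e sc C e k (congr sc n k X A) \<le> (opnorm n k X)\<^sup>2 * nu_e sc C e n A"
proof -
  define x where "x = nu_e sc C e k (congr sc n k X A)"
  define a where "a = nu_e sc C e n A"
  have a0: "a \<ge> 0" unfolding a_def using nu_ge0 assms by auto
  have key: "x \<le> r\<^sup>2 * a" if "r > 0" "r \<ge> opnorm n k X" for r
  proof -
    have "x / r\<^sup>2 \<le> a" unfolding a_def nu_S[of n A]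
    proof (rule cInf_greatest[OF S_ne[OF assms(1,3)]])
      fix s0 assume "s0 \<in> S n A"
      then have "x \<le> s0 * r\<^sup>2" unfolding x_def using congr_step assms that nu_le by blast
      then show "x / r\<^sup>2 \<le> s0" using that by (simp add: field_simps)
    qed
    then show ?thesis using that by (simp add: field_simps)
  qed
  show ?thesis
  proof (cases "opnorm n k X > 0")
    case True
    then show ?thesis using key[OF True] unfolding x_def a_def by simp
  next
    case False
    then have o0: "opnorm n k X = 0" using opnorm_nonneg[of n k X] by simp
    have "x \<le> 0"
    proof (rule ccontr)
      assume "\<not> x \<le> 0"
      then have xp: "x > 0" by simp
      define r where "r = sqrt (x / (2 * (a + 1)))"
      have rp: "r > 0" unfolding r_def using xp a0 by simp
      have r2: "r\<^sup>2 = x / (2 * (a + 1))" unfolding r_def using xp a0 by simp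
      have "x \<le> r\<^sup>2 * a" using key[OF rp] rp o0 by simp
      also have "\<dots> = x * a / (2 * (a + 1))" unfolding r2 by simp
      also have "\<dots> < x" using xp a0 by (simp add: field_simps) (intro add_nonneg_pos mult_nonneg_nonneg; simp)
      finally show False by simp
    qed
    then show ?thesis using o0 unfolding x_def by simp
  qed
qed

end


context amou begin

lemma congr_sel: "congr sc N n (\<lambda>p i. if p = g i then 1 else 0) M i j =
  (if i < n \<and> j < n then (if g i < N \<and> g j < N then M (g i) (g j) else 0) else 0)"
proof (cases "i < n \<and> j < n")
  case True
  have "(\<Sum>q<N. sc (cnj (if p = g i then 1 else 0) * (if q = g j then 1 else 0)) (M p q))
     = (if p = g i then (if g j < N then M p (g j) else 0) else 0)" for p
  proof -
    have "(\<Sum>q<N. sc (cnj (if p = g i then 1 else 0) * (if q = g j then 1 else 0)) (M p q))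
      = (\<Sum>q<N. if q = g j then (if p = g i then M p q else 0) else 0)"
      by (rule sum.cong) auto
    then show ?thesis by (simp add: sum.delta')
  qed
  then show ?thesis unfolding congr_def using True by (simp add: sum.delta')
next
  case False
  then show ?thesis unfolding congr_def by auto
qed

lemma sum_shift_delta: "(\<Sum>p<(m::nat). if i = n + p then g p else 0) = (if n \<le> i \<and> i < n + m then g (i - n) else (0::'a::comm_monoid_add))"
proof -
  have "(\<Sum>p<m. if i = n + p then g p else 0) = (\<Sum>p<m. if p = i - n then (if n \<le> i then g p else 0) else 0)"
  proof (rule sum.cong[OF refl])
    fix p show "(if i = n + p then g p else 0) = (if p = i - n then (if n \<le> i then g p else 0) else 0)"
      by (cases "i = n + p") auto

  qed
  then show ?thesis by (auto simp: sum.delta)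
qed

lemma sum2_id: "(\<Sum>p<(n::nat). \<Sum>q<n. if i = id p then (if j = id q then M p q else 0) else 0) =
   (if i < n \<and> j < n then M i j else (0::'a::comm_monoid_add))"
proof -
  have "(\<Sum>q<n. if i = id p then (if j = id q then M p q else 0) else 0) =
     (if i = p then (if j < n then M p j else 0) else 0)" for p
    by (simp add: sum.delta')
  then show ?thesis by (simp add: sum.delta')
qed

lemma sum2_shift: "(\<Sum>p<(m::nat). \<Sum>q<m. if i = n + p then (if j = n + q then M p q else 0) else 0) =
   (if n \<le> i \<and> i < n + m \<and> n \<le> j \<and> j < n + m then M (i - n) (j - n) else (0::'a::comm_monoid_add))"
proof -
  have "(\<Sum>q<m. if i = n + p then (if j = n + q then M p q else 0) else 0) =
     (if i = n + p then (if n \<le> j \<and> j < n + m then M p (j - n) else 0) else 0)" for p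
    by (simp add: sum_shift_delta)
  then show ?thesis by (simp add: sum_shift_delta)
qed

lemma congr_emb: "congr sc n N (\<lambda>p i. if i = f p then 1 else 0) M i j =
  (if i < N \<and> j < N then (\<Sum>p<n. \<Sum>q<n. if i = f p then (if j = f q then M p q else 0) else 0) else 0)"
  unfolding congr_def by (intro if_cong refl sum.cong) auto

lemma dsum_nu: assumes "n \<ge> 1" "m \<ge> 1" "A \<in> Mn n" "B \<in> Mn m"
  shows "nu_e sc C e (n + m) (dsum n m A B) = max (nu_e sc C e n A) (nu_e sc C e m B)"
proof -
  define D where "D = dsum n m A B"
  have DM: "D \<in> Mn (n+m)" unfolding D_def dsum_def Mn_def by auto
  have Az: "A i j = 0" if "\<not> (i < n \<and> j < n)" for i j using assms(3) that unfolding Mn_def by auto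
  have Bz: "B i j = 0" if "\<not> (i < m \<and> j < m)" for i j using assms(4) that unfolding Mn_def by auto
  have a: "t \<in> S n A" if "t \<in> S (n+m) D" for t
  proof -
    have "congr sc (n+m) n (\<lambda>p i. if p = id i then 1 else 0) (mdiff (EI (n+m) t) D) = mdiff (EI n t) A"
      unfolding congr_sel by (intro ext) (auto simp: mdiff_def mscaleR_def mscaleC_def ediag_def D_def dsum_def Az)
    then show ?thesis using that C_congr[of "n+m" n] assms unfolding S_def by (metis (no_types, lifting) add_increasing2 le0 mem_Collect_eq)
  qed
  have b: "t \<in> S m B" if "t \<in> S (n+m) D" for t
  proof -
    have "congr sc (n+m) m (\<lambda>p i. if p = n + i then 1 else 0) (mdiff (EI (n+m) t) D) = mdiff (EI m t) B"
      unfolding congr_sel by (intro ext) (auto simp: mdiff_def mscaleR_def mscaleC_def ediag_def D_def dsum_def Bz)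
    then show ?thesis using that C_congr[of "n+m" m] assms unfolding S_def by (metis (no_types, lifting) add_increasing le0 mem_Collect_eq)
  qed
  have c: "t \<in> S (n+m) D" if "t \<in> S n A" "t \<in> S m B" for t
  proof -
    have "mdiff (EI (n+m) t) D = madd (congr sc n (n+m) (\<lambda>p i. if i = id p then 1 else 0) (mdiff (EI n t) A))
        (congr sc m (n+m) (\<lambda>p i. if i = n + p then 1 else 0) (mdiff (EI m t) B))"
    proof (intro ext)
      fix i j
      have e1: "congr sc n (n+m) (\<lambda>p i. if i = id p then 1 else 0) (mdiff (EI n t) A) i j =
        (if i < n \<and> j < n then mdiff (EI n t) A i j else 0)"
        unfolding congr_emb sum2_id by auto
      have e2: "congr sc m (n+m) (\<lambda>p i. if i = n + p then 1 else 0) (mdiff (EI m t) B) i j =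
        (if n \<le> i \<and> i < n + m \<and> n \<le> j \<and> j < n + m then mdiff (EI m t) B (i - n) (j - n) else 0)"
        unfolding congr_emb sum2_shift by auto
      show "mdiff (EI (n+m) t) D i j = madd (congr sc n (n+m) (\<lambda>p i. if i = id p then 1 else 0) (mdiff (EI n t) A))
        (congr sc m (n+m) (\<lambda>p i. if i = n + p then 1 else 0) (mdiff (EI m t) B)) i j"
        unfolding madd_def e1 e2 by (auto simp: mdiff_def mscaleR_def mscaleC_def ediag_def D_def dsum_def)
    qed
    moreover have "congr sc n (n+m) (\<lambda>p i. if i = id p then 1 else 0) (mdiff (EI n t) A) \<in> C (n+m)"
      using that(1) C_congr assms unfolding S_def by simp
    moreover have "congr sc m (n+m) (\<lambda>p i. if i = n + p then 1 else 0) (mdiff (EI m t) B) \<in> C (n+m)"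
      using that(2) C_congr assms unfolding S_def by simp
    ultimately show ?thesis using C_add[of "n+m"] assms that unfolding S_def by auto
  qed
  have "nu_e sc C e n A \<le> nu_e sc C e (n+m) D" unfolding nu_S[of "n+m" D]
    by (rule cInf_greatest[OF S_ne[OF _ DM]]) (use assms a nu_le in auto)
  moreover have "nu_e sc C e m B \<le> nu_e sc C e (n+m) D" unfolding nu_S[of "n+m" D]
    by (rule cInf_greatest[OF S_ne[OF _ DM]]) (use assms b nu_le in auto)
  moreover have "nu_e sc C e (n+m) D \<le> max (nu_e sc C e n A) (nu_e sc C e m B)"
  proof (rule dense_ge)
    fix t assume "max (nu_e sc C e n A) (nu_e sc C e m B) < t"
    then have "t \<in> S n A" "t \<in> S m B" using nu_less assms by auto
    then show "nu_e sc C e (n+m) D \<le> t" using c nu_le by blast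
  qed
  ultimately show ?thesis unfolding D_def by linarith
qed

end

theorem lemma4p5:
  fixes sc :: "complex \<Rightarrow> 'z::ab_group_add \<Rightarrow> 'z" and C :: "nat \<Rightarrow> 'z mat set" and e :: 'z
  assumes "accretive_AMOU_space sc C e"
  shows "matrix_gauge sc (nu_e sc C e)
    \<and> (\<forall>n\<ge>1. C n = {z \<in> Mn n. nu_e sc C e n (mneg z) = 0})"
proof -
  interpret amou sc C e by (rule amou.intro) (rule assms)
  have "matrix_gauge sc (nu_e sc C e)"
    unfolding matrix_gauge_def using nu_ge0 subadd homog congr_nu dsum_nu by blast
  moreover have "\<forall>n\<ge>1. C n = {z \<in> Mn n. nu_e sc C e n (mneg z) = 0}" using part2 by blast
  ultimately show ?thesis by blast
qed

end
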